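(* Let $(B_t)_{t\ge 0}$ be a standard Brownian motion, let $a,\sigma\in\mathbb{R}$, and define $X^*_t = X^*_0 + \sigma t B_t + a t$ for $t\ge 0$. If $X^*_0 = 0$, then $(X^*_t)_{t>0}$ is a process with proportional increments on $]0,+\infty[$, i.e. for every $t>0$ with $X^*_t\neq 0$ and every $s\ge 0$, $$E\big(X^*_{t+s}-X^*_t \,\big|\, \mathcal{F}_t\big) = \frac{s}{t}\,X^*_t \quad \text{a.s.},$$ where $\mathcal{F}_t=\sigma(X^*_u : u\le t)$ is the natural filtration of $X^*$.
   Context: A stochastic process $(N_t)_{t>0}$ on a probability space, with natural filtration $\mathcal{F}_t=\sigma(N_u: u\le t)$, is called a process with proportional increments on $]0,+\infty[$ if for all $t>0$ with $N_t\neq 0$ and all $s\ge 0$: $E(N_{t+s}-N_t\mid\mathcal{F}_t)=\frac{s}{t}N_t$ almost surely. *)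

theory Defs
  imports "HOL-Probability.Probability"
begin

definition std_brownian_motion :: "'a measure \<Rightarrow> (real \<Rightarrow> 'a \<Rightarrow> real) \<Rightarrow> bool" where
  "std_brownian_motion M B \<longleftrightarrow>
     prob_space M \<and>
     (\<forall>t. B t \<in> borel_measurable M) \<and>
     (AE x in M. B 0 x = 0) \<and>
     (AE x in M. continuous_on {0..} (\<lambda>t. B t x)) \<and>
     (\<forall>s t. 0 \<le> s \<and> s < t \<longrightarrow>
        distributed M lborel (\<lambda>x. B t x - B s x) (\<lambda>y. ennreal (normal_density 0 (sqrt (t - s)) y))) \<and>
     (\<forall>ts :: real list. sorted ts \<and> ts \<noteq> [] \<and> hd ts \<ge> 0 \<longrightarrow>
        prob_space.indep_vars M (\<lambda>_. borel) (\<lambda>i x. B (ts ! Suc i) x - B (ts ! i) x) {..<length ts - 1})"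

definition natural_filtration :: "'a measure \<Rightarrow> (real \<Rightarrow> 'a \<Rightarrow> real) \<Rightarrow> real \<Rightarrow> 'a measure" where
  "natural_filtration M N t =
     sigma (space M) (\<Union>u\<in>{0<..t}. {N u -` A \<inter> space M | A. A \<in> sets borel})"

definition proportional_increments :: "'a measure \<Rightarrow> (real \<Rightarrow> 'a \<Rightarrow> real) \<Rightarrow> bool" where
  "proportional_increments M N \<longleftrightarrow>
     (\<forall>t>0. \<forall>s\<ge>0. \<not> (AE x in M. N t x = 0) \<longrightarrow>
        (AE x in M. real_cond_exp M (natural_filtration M N t) (\<lambda>y. N (t + s) y - N t y) x
                     = s / t * N t x))"

end

theory Submission
  imports Defs
begin

lemma key_indep:
  assumes bm: "std_brownian_motion M B" and t: "0 < t" "0 < s"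
    and K: "finite K" "K \<noteq> {}" "K \<subseteq> {0<..t}"
    and A: "\<And>k. k \<in> K \<Longrightarrow> A k \<in> sets borel" and C: "C \<in> sets borel"
  shows "measure M ((\<Inter>k\<in>K. (\<lambda>x. \<sigma>*k*B k x + a*k) -` A k \<inter> space M)
            \<inter> ((\<lambda>x. B (t+s) x - B t x) -` C \<inter> space M))
       = measure M (\<Inter>k\<in>K. (\<lambda>x. \<sigma>*k*B k x + a*k) -` A k \<inter> space M)
         * measure M ((\<lambda>x. B (t+s) x - B t x) -` C \<inter> space M)"
proof -
  interpret prob_space M using bm by (simp add: std_brownian_motion_def)
  have measB[measurable]: "\<And>u. B u \<in> borel_measurable M" using bm by (simp add: std_brownian_motion_def)
  have B0: "AE x in M. B 0 x = 0" using bm by (simp add: std_brownian_motion_def)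
  have indall: "\<And>ts. sorted ts \<Longrightarrow> ts \<noteq> [] \<Longrightarrow> hd ts \<ge> 0 \<Longrightarrow>
        indep_vars (\<lambda>_. borel) (\<lambda>i x. B (ts ! Suc i) x - B (ts ! i) x) {..<length ts - 1}"
    using bm by (simp add: std_brownian_motion_def)
  define S1 where "S1 = insert 0 (K - {t})"
  define L1 where "L1 = sorted_list_of_set S1"
  define ts where "ts = L1 @ [t, t+s]"
  define m where "m = length L1"
  have fS1: "finite S1" using K by (simp add: S1_def)
  have setL1: "set L1 = S1" using fS1 by (simp add: L1_def)
  have sL1: "sorted L1" by (simp add: L1_def)
  have L1b: "\<forall>x\<in>set L1. 0 \<le> x \<and> x < t" using K t by (auto simp: setL1 S1_def)
  have L1ne: "L1 \<noteq> []" using setL1 S1_def by auto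
  have sts: "sorted ts" unfolding ts_def using sL1 L1b t by (auto simp: sorted_append)
  have hd0: "hd ts \<ge> 0" unfolding ts_def using L1ne L1b by (simp add: hd_in_set)
  have lents: "length ts - 1 = Suc m" by (simp add: ts_def m_def)
  define Y where "Y = (\<lambda>i x. B (ts ! Suc i) x - B (ts ! i) x)"
  have ind: "indep_vars (\<lambda>_. borel) Y {..<Suc m}"
    using indall[OF sts _ hd0] lents by (simp add: ts_def Y_def)
  have tsm: "ts ! m = t" "ts ! Suc m = t + s" by (simp_all add: ts_def m_def nth_append)
  have ts0: "ts ! 0 = 0"
  proof -
    have "0 \<in> set L1" by (simp add: setL1 S1_def)
    then obtain j where j: "j < m" "L1 ! j = 0" by (auto simp: in_set_conv_nth m_def)
    have "L1 ! 0 \<le> L1 ! j" using sorted_nth_mono[OF sL1, of 0 j] j by (simp add: m_def)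
    moreover have "L1 ! 0 \<ge> 0" using L1b L1ne by simp
    ultimately show ?thesis using j L1ne by (simp add: ts_def nth_append)
  qed
  have "\<forall>k\<in>K. \<exists>j. j \<le> m \<and> ts ! j = k"
  proof
    fix k assume k: "k \<in> K"
    show "\<exists>j. j \<le> m \<and> ts ! j = k"
    proof (cases "k = t")
      case True then show ?thesis using tsm by auto
    next
      case False
      then have "k \<in> set L1" using k by (simp add: setL1 S1_def)
      then obtain j where "j < m" "L1 ! j = k" by (auto simp: in_set_conv_nth m_def)
      then show ?thesis by (intro exI[of _ j]) (simp add: ts_def nth_append m_def)
    qed
  qed
  then obtain jf where jf: "\<And>k. k \<in> K \<Longrightarrow> jf k \<le> m \<and> ts ! (jf k) = k" by metis
  have tele: "\<And>x j. B (ts ! j) x - B (ts ! 0) x = (\<Sum>i<j. Y i x)"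
    unfolding Y_def by (rule sum_lessThan_telescope[symmetric])
  define Kf where "Kf = (\<lambda>b::bool. if b then {..<m} else {m})"
  have IR: "indep_vars (\<lambda>j. PiM (Kf j) (\<lambda>_. borel)) (\<lambda>j \<omega>. restrict (\<lambda>i. Y i \<omega>) (Kf j)) UNIV"
    by (rule indep_vars_restrict[OF ind]) (auto simp: Kf_def disjoint_family_on_def)
  define At where "At = {y \<in> space (PiM {..<m} (\<lambda>_. borel :: real measure)).
        \<forall>k\<in>K. \<sigma>*k*(\<Sum>i<jf k. y i) + a*k \<in> A k}"
  define Ct where "Ct = {y \<in> space (PiM {m} (\<lambda>_. borel :: real measure)). y m \<in> C}"
  have fmeas: "\<And>k. k \<in> K \<Longrightarrow> (\<lambda>y. \<sigma>*k*(\<Sum>i<jf k. y i) + a*k) \<in> borel_measurable (PiM {..<m} (\<lambda>_. borel :: real measure))"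
  proof -
    fix k assume k: "k \<in> K"
    have "\<And>i. i \<in> {..<jf k} \<Longrightarrow> (\<lambda>y. y i) \<in> borel_measurable (PiM {..<m} (\<lambda>_. borel :: real measure))"
      using jf[OF k] by (intro measurable_component_singleton) auto
    then show "(\<lambda>y. \<sigma>*k*(\<Sum>i<jf k. y i) + a*k) \<in> borel_measurable (PiM {..<m} (\<lambda>_. borel :: real measure))"
      by (intro borel_measurable_add borel_measurable_times borel_measurable_sum) auto
  qed
  have Atm: "At \<in> sets (PiM {..<m} (\<lambda>_. borel :: real measure))"
    unfolding At_def
  proof (rule sets.sets_Collect_finite_All[OF _ K(1)])
    fix k assume k: "k \<in> K"
    have "(\<lambda>y. \<sigma>*k*(\<Sum>i<jf k. y i) + a*k) -` A k \<inter> space (PiM {..<m} (\<lambda>_. borel :: real measure))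
       \<in> sets (PiM {..<m} (\<lambda>_. borel :: real measure))"
      using measurable_sets[OF fmeas[OF k] A[OF k]] .
    then show "{y \<in> space (PiM {..<m} (\<lambda>_. borel :: real measure)). \<sigma>*k*(\<Sum>i<jf k. y i) + a*k \<in> A k}
       \<in> sets (PiM {..<m} (\<lambda>_. borel :: real measure))"
      by (simp add: vimage_def Int_def conj_commute)
  qed
  have Ctm: "Ct \<in> sets (PiM {m} (\<lambda>_. borel :: real measure))"
  proof -
    have "(\<lambda>y. y m) \<in> borel_measurable (PiM {m} (\<lambda>_. borel :: real measure))"
      by (rule measurable_component_singleton) simp
    from measurable_sets[OF this C] show ?thesis
      by (simp add: Ct_def vimage_def Int_def conj_commute)
  qed
  define E where "E = (\<Inter>k\<in>K. (\<lambda>x. \<sigma>*k*B k x + a*k) -` A k \<inter> space M)"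
  define DC where "DC = (\<lambda>x. B (t+s) x - B t x) -` C \<inter> space M"
  define E' where "E' = (\<lambda>\<omega>. restrict (\<lambda>i. Y i \<omega>) (Kf True)) -` At \<inter> space M"
  have DC': "(\<lambda>\<omega>. restrict (\<lambda>i. Y i \<omega>) (Kf False)) -` Ct \<inter> space M = DC"
    by (auto simp: DC_def Ct_def Kf_def Y_def tsm space_PiM)
  have E'_eq: "E' = {\<omega> \<in> space M. \<forall>k\<in>K. \<sigma>*k*(\<Sum>i<jf k. Y i \<omega>) + a*k \<in> A k}"
  proof -
    have "\<And>\<omega> k. k \<in> K \<Longrightarrow> (\<Sum>i<jf k. restrict (\<lambda>i. Y i \<omega>) {..<m} i) = (\<Sum>i<jf k. Y i \<omega>)"
      using jf by (intro sum.cong) fastforce+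
    then show ?thesis by (auto simp: E'_def At_def Kf_def space_PiM)
  qed
  have Em: "E \<in> events" unfolding E_def using K(1,2) A by (intro sets.finite_INT) auto
  have DCm: "DC \<in> events" unfolding DC_def using C by measurable
  have E'm: "E' \<in> events" unfolding E'_eq
  proof (rule sets.sets_Collect_finite_All[OF _ K(1)])
    fix k assume k: "k \<in> K"
    have "(\<lambda>\<omega>. \<sigma>*k*(\<Sum>i<jf k. Y i \<omega>) + a*k) \<in> borel_measurable M" unfolding Y_def by measurable
    from measurable_sets[OF this A[OF k]]
    show "{\<omega> \<in> space M. \<sigma>*k*(\<Sum>i<jf k. Y i \<omega>) + a*k \<in> A k} \<in> events"
      by (simp add: vimage_def Int_def conj_commute)
  qed
  have AEE: "AE x in M. x \<in> E \<longleftrightarrow> x \<in> E'"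
    using B0
  proof (rule AE_mp, intro AE_I2 impI)
    fix x assume x: "x \<in> space M" "B 0 x = 0"
    have "B k x = (\<Sum>i<jf k. Y i x)" if k: "k \<in> K" for k
    proof -
      have "B (ts ! jf k) x - B (ts ! 0) x = (\<Sum>i<jf k. Y i x)" by (rule tele)
      then show ?thesis using jf[OF k] ts0 x by simp
    qed
    then show "x \<in> E \<longleftrightarrow> x \<in> E'" using K(2) x by (auto simp: E_def E'_eq)
  qed
  have P1: "prob E = prob E'" by (rule finite_measure_eq_AE[OF AEE Em E'm])
  have P2: "prob (E \<inter> DC) = prob (E' \<inter> DC)"
    by (rule finite_measure_eq_AE) (use AEE Em E'm DCm in auto)
  have "prob (\<Inter>j\<in>UNIV. (\<lambda>\<omega>. restrict (\<lambda>i. Y i \<omega>) (Kf j)) -` (if j then At else Ct) \<inter> space M)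
     = (\<Prod>j\<in>UNIV. prob ((\<lambda>\<omega>. restrict (\<lambda>i. Y i \<omega>) (Kf j)) -` (if j then At else Ct) \<inter> space M))"
    by (rule indep_varsD[OF IR]) (auto simp: Kf_def Atm Ctm)
  then have "prob (E' \<inter> DC) = prob E' * prob DC"
    using DC' by (simp add: UNIV_bool E'_def Int_commute)
  then have "prob (E \<inter> DC) = prob E * prob DC" using P1 P2 by simp
  then show ?thesis unfolding E_def DC_def .
qed

lemma inter_aux:
  "{x\<in>Om. \<forall>k\<in>K1. X k x \<in> A1 k} \<inter> {x\<in>Om. \<forall>k\<in>K2. X k x \<in> A2 k}
   = {x\<in>Om. \<forall>k\<in>K1\<union>K2. X k x \<in> (if k \<in> K1 then A1 k else UNIV) \<inter> (if k \<in> K2 then A2 k else UNIV)}"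
  by (rule set_eqI) auto

lemma indep_F:
  assumes bm: "std_brownian_motion M B" and t: "0 < t" "0 < s"
  shows "prob_space.indep_set M (sets (natural_filtration M (\<lambda>u x. \<sigma>*u*B u x + a*u) t))
     (sigma_sets (space M) {(\<lambda>x. B (t+s) x - B t x) -` C \<inter> space M | C. C \<in> sets borel})"
proof -
  interpret prob_space M using bm by (simp add: std_brownian_motion_def)
  have measB[measurable]: "\<And>u. B u \<in> borel_measurable M" using bm by (simp add: std_brownian_motion_def)
  define X where "X = (\<lambda>u x. \<sigma>*u*B u x + a*u)"
  define D where "D = (\<lambda>x. B (t+s) x - B t x)"
  define DP where "DP = {D -` C \<inter> space M | C. C \<in> sets borel}"
  define G where "G = (\<Union>u\<in>{0<..t}. {X u -` A \<inter> space M | A. A \<in> sets borel})"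
  define P where "P = {(\<Inter>k\<in>K. X k -` A k \<inter> space M) | K A. finite K \<and> K \<noteq> {} \<and> K \<subseteq> {0<..t}
        \<and> (\<forall>k\<in>K. A k \<in> sets borel)}"
  have XM[measurable]: "\<And>u. X u \<in> borel_measurable M" unfolding X_def by measurable
  have INTeq: "\<And>K A. K \<noteq> {} \<Longrightarrow> (\<Inter>k\<in>K. X k -` A k \<inter> space M) = {x \<in> space M. \<forall>k\<in>K. X k x \<in> A k}"
    by blast
  have Pev: "P \<subseteq> events"
  proof
    fix p assume "p \<in> P"
    then obtain K A where KA: "p = (\<Inter>k\<in>K. X k -` A k \<inter> space M)" "finite K" "K \<noteq> {}"
       "\<forall>k\<in>K. A k \<in> sets borel" unfolding P_def by blast
    show "p \<in> events" unfolding KA(1)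
      by (rule sets.finite_INT[OF KA(2,3)]) (use KA(4) measurable_sets[OF XM] in blast)
  qed
  have DPev: "DP \<subseteq> events" unfolding DP_def D_def by auto
  have indP: "indep_set P DP"
    unfolding indep_sets2_eq
  proof (intro conjI Pev DPev ballI)
    fix p d assume p: "p \<in> P" and d: "d \<in> DP"
    from p obtain K A where KA: "p = (\<Inter>k\<in>K. X k -` A k \<inter> space M)" "finite K" "K \<noteq> {}"
       "K \<subseteq> {0<..t}" "\<forall>k\<in>K. A k \<in> sets borel" unfolding P_def by blast
    from d obtain C where C: "d = D -` C \<inter> space M" "C \<in> sets borel" unfolding DP_def by blast
    show "prob (p \<inter> d) = prob p * prob d"
      unfolding KA(1) C(1) X_def D_def
      by (rule key_indep[OF bm t KA(2,3,4)]) (use KA(5) C(2) in auto)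
  qed
  have stP: "Int_stable P"
    unfolding Int_stable_def
  proof (intro ballI)
    fix p q assume p: "p \<in> P" and q: "q \<in> P"
    from p obtain K1 A1 where 1: "p = (\<Inter>k\<in>K1. X k -` A1 k \<inter> space M)" "finite K1" "K1 \<noteq> {}"
       "K1 \<subseteq> {0<..t}" "\<forall>k\<in>K1. A1 k \<in> sets borel" unfolding P_def by blast
    from q obtain K2 A2 where 2: "q = (\<Inter>k\<in>K2. X k -` A2 k \<inter> space M)" "finite K2" "K2 \<noteq> {}"
       "K2 \<subseteq> {0<..t}" "\<forall>k\<in>K2. A2 k \<in> sets borel" unfolding P_def by blast
    define A where "A = (\<lambda>k. (if k \<in> K1 then A1 k else UNIV) \<inter> (if k \<in> K2 then A2 k else UNIV))"
    have ne: "K1 \<union> K2 \<noteq> {}" using 1(3) by simp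
    have eq: "p \<inter> q = (\<Inter>k\<in>K1 \<union> K2. X k -` A k \<inter> space M)"
      unfolding 1(1) 2(1) INTeq[OF 1(3)] INTeq[OF 2(3)] INTeq[OF ne]
      unfolding A_def by (rule inter_aux)
    moreover have "\<forall>k\<in>K1 \<union> K2. A k \<in> sets borel" using 1(5) 2(5) by (auto simp: A_def)
    then show "p \<inter> q \<in> P" unfolding P_def
      by (intro CollectI exI[of _ "K1 \<union> K2"] exI[of _ A] conjI eq) (use 1 2 in auto)
  qed
  have stDP: "Int_stable DP"
    unfolding Int_stable_def DP_def
  proof (intro ballI)
    fix p q assume "p \<in> {D -` C \<inter> space M | C. C \<in> sets borel}" "q \<in> {D -` C \<inter> space M | C. C \<in> sets borel}"
    then obtain C1 C2 where "p = D -` C1 \<inter> space M" "q = D -` C2 \<inter> space M" "C1 \<in> sets borel" "C2 \<in> sets borel" by blast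
    then show "p \<inter> q \<in> {D -` C \<inter> space M | C. C \<in> sets borel}"
      by (intro CollectI exI[of _ "C1 \<inter> C2"]) auto
  qed
  have indS: "indep_set (sigma_sets (space M) P) (sigma_sets (space M) DP)"
    by (rule indep_set_sigma_sets[OF indP stP stDP])
  have GP: "G \<subseteq> P"
  proof
    fix g assume "g \<in> G"
    then obtain u A where uA: "u \<in> {0<..t}" "A \<in> sets borel" "g = X u -` A \<inter> space M" unfolding G_def by blast
    then show "g \<in> P" unfolding P_def
      by (intro CollectI exI[of _ "{u}"] exI[of _ "\<lambda>_. A"]) auto
  qed
  have "sets (natural_filtration M X t) = sigma_sets (space M) G"
    unfolding natural_filtration_def G_def by (rule sets_measure_of) auto
  then have sub: "sets (natural_filtration M X t) \<subseteq> sigma_sets (space M) P"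
    using sigma_sets_mono'[OF GP] by simp
  have "indep_set (sets (natural_filtration M X t)) (sigma_sets (space M) DP)"
    using indS sub unfolding indep_sets2_eq by blast
  then show ?thesis unfolding X_def DP_def D_def .
qed

lemma incr_props:
  assumes bm: "std_brownian_motion M B" and uv: "0 \<le> u" "u < v"
  shows "integrable M (\<lambda>x. B v x - B u x)" "prob_space.expectation M (\<lambda>x. B v x - B u x) = 0"
proof -
  interpret prob_space M using bm by (simp add: std_brownian_motion_def)
  have D: "distributed M lborel (\<lambda>x. B v x - B u x) (\<lambda>y. ennreal (normal_density 0 (sqrt (v - u)) y))"
    using bm uv by (simp add: std_brownian_motion_def)
  have sp: "0 < sqrt (v - u)" using uv by simp
  show "integrable M (\<lambda>x. B v x - B u x)"
    by (rule distributed_integrable_var[OF D]) (simp_all add: integrable_normal_moment_nz_1[OF sp])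
  show "expectation (\<lambda>x. B v x - B u x) = 0"
    by (rule normal_distributed_expectation[OF sp D])
qed

lemma integrable_B:
  assumes bm: "std_brownian_motion M B" and u: "0 \<le> u"
  shows "integrable M (B u)"
proof -
  interpret prob_space M using bm by (simp add: std_brownian_motion_def)
  have measB[measurable]: "\<And>u. B u \<in> borel_measurable M" using bm by (simp add: std_brownian_motion_def)
  have B0: "AE x in M. B 0 x = 0" using bm by (simp add: std_brownian_motion_def)
  have i0: "integrable M (B 0)"
    by (rule integrable_cong_AE[THEN iffD2, of _ _ "\<lambda>_. 0"]) (use B0 in auto)
  show ?thesis
  proof (cases "u = 0")
    case True then show ?thesis using i0 by simp
  next
    case False
    then have "integrable M (\<lambda>x. B u x - B 0 x)" using incr_props(1)[OF bm, of 0 u] u by simp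
    from Bochner_Integration.integrable_add[OF this i0] show ?thesis by simp
  qed
qed

theorem mainTheorem1:
  fixes M :: "'a measure" and B :: "real \<Rightarrow> 'a \<Rightarrow> real" and a \<sigma> X0 :: real
  assumes "std_brownian_motion M B"
    and "X0 = 0"
  shows "proportional_increments M (\<lambda>t x. X0 + \<sigma> * t * B t x + a * t)"
proof -
  note bm = assms(1)
  interpret prob_space M using bm by (simp add: std_brownian_motion_def)
  have measB[measurable]: "\<And>u. B u \<in> borel_measurable M" using bm by (simp add: std_brownian_motion_def)
  have N_eq: "(\<lambda>t x. X0 + \<sigma> * t * B t x + a * t) = (\<lambda>u x. \<sigma>*u*B u x + a*u)" using assms(2) by simp
  define X where "X = (\<lambda>u x. \<sigma>*u*B u x + a*u)"
  have XM[measurable]: "\<And>u. X u \<in> borel_measurable M" unfolding X_def by measurable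
  have intX: "\<And>u. 0 \<le> u \<Longrightarrow> integrable M (X u)"
  proof -
    fix u :: real assume u: "0 \<le> u"
    have "integrable M (\<lambda>x. \<sigma>*u*B u x)" using integrable_B[OF bm u] by simp
    then show "integrable M (X u)" unfolding X_def by simp
  qed
  show ?thesis unfolding N_eq X_def[symmetric] proportional_increments_def
  proof (intro allI impI)
    fix t s :: real assume t: "0 < t" and s: "0 \<le> s"
    define F where "F = natural_filtration M X t"
    define G where "G = (\<Union>u\<in>{0<..t}. {X u -` A \<inter> space M | A. A \<in> sets borel})"
    have GM: "G \<subseteq> sets M" unfolding G_def by auto
    have GP: "G \<subseteq> Pow (space M)" unfolding G_def by auto
    have spF: "space F = space M" unfolding F_def natural_filtration_def G_def[symmetric]
      using GP by (rule space_measure_of)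
    have setsF: "sets F = sigma_sets (space M) G" unfolding F_def natural_filtration_def G_def[symmetric]
      using GP by (rule sets_measure_of)
    have subF: "sets F \<subseteq> sets M" unfolding setsF using GM by (rule sets.sigma_sets_subset)
    have subalg: "subalgebra M F" unfolding subalgebra_def using spF subF by simp
    have "finite_measure_subalgebra M F"
      unfolding finite_measure_subalgebra_def finite_measure_subalgebra_axioms_def
      using subalg finite_measure_axioms by simp
    then interpret sigma_finite_subalgebra M F by (rule finite_measure_subalgebra_is_sigma_finite)
    have XtF[measurable]: "X t \<in> borel_measurable F"
    proof (rule measurableI)
      fix A :: "real set" assume "A \<in> sets borel"
      then have "X t -` A \<inter> space M \<in> G" unfolding G_def using t by (intro UN_I[of t]) auto
      then show "X t -` A \<inter> space F \<in> sets F" unfolding spF setsF by auto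
    qed simp
    show "AE x in M. real_cond_exp M F (\<lambda>y. X (t + s) y - X t y) x = s / t * X t x"
    proof (cases "s = 0")
      case True
      have "AE x in M. real_cond_exp M F (\<lambda>_. 0) x = 0"
        by (rule real_cond_exp_F_meas) auto
      then show ?thesis using True by simp
    next
      case False
      then have s0: "0 < s" using s by simp
      define D where "D = (\<lambda>x. B (t+s) x - B t x)"
      have DM[measurable]: "D \<in> borel_measurable M" unfolding D_def by measurable
      have intD: "integrable M D" unfolding D_def using incr_props(1)[OF bm, of t "t+s"] t s0 by simp
      have ED: "expectation D = 0" unfolding D_def using incr_props(2)[OF bm, of t "t+s"] t s0 by simp
      have indF: "indep_set (sets F) (sigma_sets (space M) {D -` C \<inter> space M | C. C \<in> sets borel})"
        using indep_F[OF bm t s0, of \<sigma> a] unfolding F_def X_def D_def .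
      have pw: "\<And>x. X (t + s) x - X t x = \<sigma>*(t+s)*D x + s/t * X t x"
        using t by (simp add: X_def D_def field_simps)
      show ?thesis
      proof (rule real_cond_exp_charact)
        show "integrable M (\<lambda>y. X (t + s) y - X t y)" using intX t s by auto
        show "integrable M (\<lambda>x. s / t * X t x)" using intX t by auto
        show "(\<lambda>x. s / t * X t x) \<in> borel_measurable F" by measurable
        fix A assume A: "A \<in> sets F"
        then have AM[measurable]: "A \<in> sets M" using subF by auto
        have "sigma_sets (space F) {indicator A -` S \<inter> space F | S. S \<in> sets (borel :: real measure)} \<subseteq> sets F"
        proof (rule sets.sigma_sets_subset)
          show "{indicator A -` S \<inter> space F | S. S \<in> sets (borel :: real measure)} \<subseteq> sets F"
            using measurable_sets[OF borel_measurable_indicator[OF A]] by auto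
        qed
        then have sub1: "sigma_sets (space M) {(indicator A :: 'a \<Rightarrow> real) -` S \<inter> space M | S. S \<in> sets borel} \<subseteq> sets F"
          unfolding spF .
        have ind: "indep_var borel (indicator A :: 'a \<Rightarrow> real) borel D"
          unfolding indep_var_eq
          using indF sub1 by (auto simp: indep_sets2_eq)
        have intA: "integrable M (indicator A :: 'a \<Rightarrow> real)" by (rule integrable_real_indicator[OF AM]) (simp add: emeasure_eq_measure)
        have "(\<integral>x. indicator A x * D x \<partial>M) = (\<integral>x. indicator A x \<partial>M) * (\<integral>x. D x \<partial>M)"
          by (rule indep_var_lebesgue_integral[OF ind intA intD])
        then have I0: "(\<integral>x. indicator A x * D x \<partial>M) = 0" using ED by simp
        have i1: "integrable M (\<lambda>x. indicator A x * D x)"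
          using integrable_mult_indicator[OF AM intD] by simp
        have i2: "integrable M (\<lambda>x. indicator A x * (s / t * X t x))"
        proof -
          have "integrable M (\<lambda>x. s / t * (indicator A x * X t x))"
            using integrable_mult_indicator[OF AM intX[of t]] t by (intro integrable_mult_right) simp
          moreover have "(\<lambda>x. s / t * (indicator A x * X t x)) = (\<lambda>x. indicator A x * (s / t * X t x))"
            by (simp add: fun_eq_iff)
          ultimately show ?thesis by simp
        qed
        have "(\<integral>x\<in>A. (X (t + s) x - X t x) \<partial>M)
            = (\<integral>x. \<sigma>*(t+s) * (indicator A x * D x) + indicator A x * (s / t * X t x) \<partial>M)"
          unfolding set_lebesgue_integral_def pw by (rule arg_cong[where f="\<lambda>f. integral\<^sup>L M f"]) (simp add: fun_eq_iff algebra_simps)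
        also have "\<dots> = \<sigma>*(t+s) * (\<integral>x. indicator A x * D x \<partial>M) + (\<integral>x. indicator A x * (s / t * X t x) \<partial>M)"
          using i1 i2 by simp
        also have "\<dots> = (\<integral>x\<in>A. (s / t * X t x) \<partial>M)"
          unfolding I0 set_lebesgue_integral_def by simp
        finally show "(\<integral>x\<in>A. (X (t + s) x - X t x) \<partial>M) = (\<integral>x\<in>A. (s / t * X t x) \<partial>M)" .
      qed
    qed
  qed
qed

end
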